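(* Let $\mathfrak{g}_\alpha$, $-1\le\alpha\le1$, be the eight-dimensional real Lie algebras with basis $\{X_1,\dots,X_8\}$ and nonzero brackets $[X_1,X_2]=2X_2$, $[X_1,X_3]=-2X_3$, $[X_2,X_3]=X_1$, $[X_1,X_4]=X_4$, $[X_1,X_5]=-X_5$, $[X_1,X_6]=X_6$, $[X_1,X_7]=-X_7$, $[X_2,X_5]=X_4$, $[X_2,X_7]=X_6$, $[X_3,X_4]=X_5$, $[X_3,X_6]=X_7$, $[X_4,X_8]=X_4$, $[X_5,X_8]=X_5$, $[X_6,X_8]=\alpha X_6$, $[X_7,X_8]=\alpha X_7$. Then every $\mathfrak{g}_\alpha$ ($-1\le\alpha\le 1$) can be obtained as a linear deformation of $\mathfrak{g}_{-1}$. Moreover, no algebra $\mathfrak{g}_\alpha$ with $-1\le\alpha\le1$ contracts nontrivially onto $\mathfrak{g}_{-1}$.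
   Context: A linear deformation of a Lie algebra $\mathfrak{g}$ with bracket $[\cdot,\cdot]$ is a Lie algebra structure on the same vector space of the form $[X,Y]_t=[X,Y]+t\,\varphi(X,Y)$, where $t$ is a scalar and $\varphi$ is a skew-symmetric bilinear map which is a 2-cocycle of $\mathfrak{g}$ with values in the adjoint module and satisfies the integrability condition $\sum_{\sigma\in S_3}\varphi(X_{\sigma(i)},\varphi(X_{\sigma(j)},X_{\sigma(k)}))=0$, so that $[\cdot,\cdot]_t$ satisfies the Jacobi identity. Contraction: given a Lie algebra $\mathfrak{g}$ and invertible linear maps $\Phi_t$, $t\in[1,\infty)$, if $[X,Y]_\infty:=\lim_{t\to\infty}\Phi_t^{-1}[\Phi_t(X),\Phi_t(Y)]$ exists for all $X,Y$, it defines a Lie algebra $\mathfrak{g}'$, a contraction of $\mathfrak{g}$; it is nontrivial if $\mathfrak{g}'\not\cong\mathfrak{g}$. The algebras $\mathfrak{g}_\alpha$, $-1\le\alpha\le1$, are pairwise non-isomorphic. *)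

theory Defs
  imports "HOL-Analysis.Analysis"
begin

text \<open>The underlying real vector space is real^8; the basis vector X_k (k = 1..8)
  is the k-th standard unit vector (index type 8 contains 1,...,7 and 8 = 0).\<close>

definition X :: "nat \<Rightarrow> real^8" where
  "X k = axis (of_nat k) 1"

definition coord :: "nat \<Rightarrow> real^8 \<Rightarrow> real" where
  "coord k v = v $ (of_nat k)"

definition br_upper :: "real \<Rightarrow> nat \<Rightarrow> nat \<Rightarrow> real^8" where
  "br_upper a i j =
     (if (i,j) = (1,2) then 2 *\<^sub>R X 2
      else if (i,j) = (1,3) then (-2) *\<^sub>R X 3
      else if (i,j) = (2,3) then X 1
      else if (i,j) = (1,4) then X 4
      else if (i,j) = (1,5) then - X 5
      else if (i,j) = (1,6) then X 6
      else if (i,j) = (1,7) then - X 7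
      else if (i,j) = (2,5) then X 4
      else if (i,j) = (2,7) then X 6
      else if (i,j) = (3,4) then X 5
      else if (i,j) = (3,6) then X 7
      else if (i,j) = (4,8) then X 4
      else if (i,j) = (5,8) then X 5
      else if (i,j) = (6,8) then a *\<^sub>R X 6
      else if (i,j) = (7,8) then a *\<^sub>R X 7
      else 0)"

definition br_basis :: "real \<Rightarrow> nat \<Rightarrow> nat \<Rightarrow> real^8" where
  "br_basis a i j = (if i < j then br_upper a i j else if j < i then - br_upper a j i else 0)"

definition gbr :: "real \<Rightarrow> real^8 \<Rightarrow> real^8 \<Rightarrow> real^8" where
  "gbr a x y = (\<Sum>i\<in>{1..8}. \<Sum>j\<in>{1..8}. (coord i x * coord j y) *\<^sub>R br_basis a i j)"

definition bilinear_map :: "('v::real_vector \<Rightarrow> 'v \<Rightarrow> 'v) \<Rightarrow> bool" where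
  "bilinear_map b \<longleftrightarrow> (\<forall>x. linear (b x)) \<and> (\<forall>y. linear (\<lambda>x. b x y))"

definition skew :: "('v::real_vector \<Rightarrow> 'v \<Rightarrow> 'v) \<Rightarrow> bool" where
  "skew b \<longleftrightarrow> (\<forall>x y. b x y = - b y x)"

definition jacobi :: "('v::real_vector \<Rightarrow> 'v \<Rightarrow> 'v) \<Rightarrow> bool" where
  "jacobi b \<longleftrightarrow> (\<forall>x y z. b x (b y z) + b y (b z x) + b z (b x y) = 0)"

definition lie_bracket :: "('v::real_vector \<Rightarrow> 'v \<Rightarrow> 'v) \<Rightarrow> bool" where
  "lie_bracket b \<longleftrightarrow> bilinear_map b \<and> skew b \<and> jacobi b"

definition adj_cocycle :: "('v::real_vector \<Rightarrow> 'v \<Rightarrow> 'v) \<Rightarrow> ('v \<Rightarrow> 'v \<Rightarrow> 'v) \<Rightarrow> bool" where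
  "adj_cocycle br phi \<longleftrightarrow> (\<forall>x y z.
      br x (phi y z) - br y (phi x z) + br z (phi x y)
      - phi (br x y) z + phi (br x z) y - phi (br y z) x = 0)"

definition integrable :: "('v::real_vector \<Rightarrow> 'v \<Rightarrow> 'v) \<Rightarrow> bool" where
  "integrable phi \<longleftrightarrow> (\<forall>x y z. phi x (phi y z) + phi y (phi z x) + phi z (phi x y) = 0)"

definition linear_deformation_cochain :: "('v::real_vector \<Rightarrow> 'v \<Rightarrow> 'v) \<Rightarrow> ('v \<Rightarrow> 'v \<Rightarrow> 'v) \<Rightarrow> bool" where
  "linear_deformation_cochain br phi \<longleftrightarrow>
     bilinear_map phi \<and> skew phi \<and> adj_cocycle br phi \<and> integrable phi"

definition lie_isomorphic :: "('v::real_vector \<Rightarrow> 'v \<Rightarrow> 'v) \<Rightarrow> ('w::real_vector \<Rightarrow> 'w \<Rightarrow> 'w) \<Rightarrow> bool" where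
  "lie_isomorphic b1 b2 \<longleftrightarrow> (\<exists>f. linear f \<and> bij f \<and> (\<forall>x y. f (b1 x y) = b2 (f x) (f y)))"

definition contraction :: "('v::real_normed_vector \<Rightarrow> 'v \<Rightarrow> 'v) \<Rightarrow> ('v \<Rightarrow> 'v \<Rightarrow> 'v) \<Rightarrow> bool" where
  "contraction b b' \<longleftrightarrow> (\<exists>Phi :: real \<Rightarrow> 'v \<Rightarrow> 'v.
      (\<forall>t\<ge>1. linear (Phi t) \<and> bij (Phi t)) \<and>
      (\<forall>x y. ((\<lambda>t. inv (Phi t) (b (Phi t x) (Phi t y))) \<longlongrightarrow> b' x y) at_top))"

end

theory Submission imports Defs begin
lemma exhaust_8:
  fixes x :: 8
  shows "x = 1 \<or> x = 2 \<or> x = 3 \<or> x = 4 \<or> x = 5 \<or> x = 6 \<or> x = 7 \<or> x = 8"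
proof (induct x)
  case (of_int z)
  then have "z = 0 \<or> z = 1 \<or> z = 2 \<or> z = 3 \<or> z = 4 \<or> z = 5 \<or> z = 6 \<or> z = 7" by fastforce
  then show ?case by auto
qed
lemma UNIV_8: "(UNIV::8 set) = {1,2,3,4,5,6,7,8}" using exhaust_8 by auto
lemma sum_8: "sum f (UNIV::8 set) = f 1 + f 2 + f 3 + f 4 + f 5 + f 6 + f 7 + f 8"
  unfolding UNIV_8 by (simp add: ac_simps)
lemma forall_8: "(\<forall>i::8. P i) \<longleftrightarrow> P 1 \<and> P 2 \<and> P 3 \<and> P 4 \<and> P 5 \<and> P 6 \<and> P 7 \<and> P 8"
  by (metis exhaust_8)
lemma set18: "{1..8::nat} = {1,2,3,4,5,6,7,8}" by auto

definition gv :: "real \<Rightarrow> real^8 \<Rightarrow> real^8 \<Rightarrow> real^8" where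
 "gv a x y = (\<chi> k. if k = 1 then x$2*y$3 - x$3*y$2
   else if k = 2 then 2*(x$1*y$2 - x$2*y$1)
   else if k = 3 then -2*(x$1*y$3 - x$3*y$1)
   else if k = 4 then (x$1*y$4 - x$4*y$1) + (x$2*y$5 - x$5*y$2) + (x$4*y$8 - x$8*y$4)
   else if k = 5 then -(x$1*y$5 - x$5*y$1) + (x$3*y$4 - x$4*y$3) + (x$5*y$8 - x$8*y$5)
   else if k = 6 then (x$1*y$6 - x$6*y$1) + (x$2*y$7 - x$7*y$2) + a*(x$6*y$8 - x$8*y$6)
   else if k = 7 then -(x$1*y$7 - x$7*y$1) + (x$3*y$6 - x$6*y$3) + a*(x$7*y$8 - x$8*y$7)
   else 0)"

lemma gbr_gv: "gbr a x y = gv a x y"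
  unfolding vec_eq_iff forall_8 gbr_def set18
  by (simp add: gv_def br_basis_def br_upper_def X_def coord_def algebra_simps axis_def)

lemma gbr_eq: "gbr a = gv a" by (intro ext) (rule gbr_gv)

definition phi0 :: "real^8 \<Rightarrow> real^8 \<Rightarrow> real^8" where
 "phi0 x y = (\<chi> k. if k = 6 then x$6*y$8 - x$8*y$6 else if k = 7 then x$7*y$8 - x$8*y$7 else 0)"

lemma deform_eq: "gv (-1) x y + (a+1) *\<^sub>R phi0 x y = gv a x y"
  unfolding vec_eq_iff forall_8 by (simp add: gv_def phi0_def algebra_simps)

lemma phi0_cochain: "linear_deformation_cochain (gbr (-1)) phi0"
  unfolding linear_deformation_cochain_def gbr_eq bilinear_map_def skew_def adj_cocycle_def integrable_def
  apply (intro conjI allI linearI)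
  apply (simp_all add: vec_eq_iff forall_8 gv_def phi0_def algebra_simps)
  done

lemma part1: "-1 \<le> a \<and> a \<le> 1 \<longrightarrow>
            (\<exists>phi t. linear_deformation_cochain (gbr (-1)) phi \<and>
                     lie_isomorphic (\<lambda>x y. gbr (-1) x y + t *\<^sub>R phi x y) (gbr a))"
proof
  show "\<exists>phi t. linear_deformation_cochain (gbr (-1)) phi \<and>
                     lie_isomorphic (\<lambda>x y. gbr (-1) x y + t *\<^sub>R phi x y) (gbr a)"
    apply (rule exI[of _ phi0], rule exI[of _ "a+1"])
    apply (simp add: phi0_cochain lie_isomorphic_def)
    apply (rule exI[of _ id])
    apply (simp add: gbr_eq deform_eq linear_id)
    done
qed

definition tr8 :: "(real^8 \<Rightarrow> real^8) \<Rightarrow> real" where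
  "tr8 g = (\<Sum>k\<in>UNIV. g (axis k 1) $ k)"

lemma tr8_trace: "tr8 g = trace (matrix g)"
  by (simp add: tr8_def trace_def matrix_def)
lemma inv_linear8: "linear (P::real^8\<Rightarrow>real^8) \<Longrightarrow> bij P \<Longrightarrow> linear (inv P)"
  by (metis bij_is_inj inj_linear_imp_inv_linear)

lemma tr8_conj:
  assumes A: "linear (A::real^8\<Rightarrow>real^8)" and P: "linear P" and b: "bij P"
  shows "tr8 (inv P \<circ> A \<circ> P) = tr8 A"
proof -
  have iP: "linear (inv P)" using P b by (rule inv_linear8)
  have PiP: "P \<circ> inv P = id" using b by (metis bij_is_surj surj_iff)
  have "matrix (inv P \<circ> A \<circ> P) = matrix (inv P \<circ> A) ** matrix P"
    using A P iP by (intro matrix_compose linear_compose)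
  also have "matrix (inv P \<circ> A) = matrix (inv P) ** matrix A"
    using A P iP by (intro matrix_compose)
  finally have m: "matrix (inv P \<circ> A \<circ> P) = (matrix (inv P) ** matrix A) ** matrix P" .
  have "tr8 (inv P \<circ> A \<circ> P) = trace (matrix P ** (matrix (inv P) ** matrix A))"
    unfolding tr8_trace m by (rule trace_mul_sym)
  also have "\<dots> = trace (matrix (P \<circ> inv P) ** matrix A)"
    using P iP by (simp add: matrix_compose matrix_mul_assoc)
  also have "\<dots> = tr8 A" by (simp add: PiP matrix_id_mat_1 tr8_trace)
  finally show ?thesis .
qed
lemma gv_comp: "gv a x y $ 1 = x$2*y$3 - x$3*y$2"
   "gv a x y $ 2 = 2*(x$1*y$2 - x$2*y$1)"
   "gv a x y $ 3 = -2*(x$1*y$3 - x$3*y$1)"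
   "gv a x y $ 4 = (x$1*y$4 - x$4*y$1) + (x$2*y$5 - x$5*y$2) + (x$4*y$8 - x$8*y$4)"
   "gv a x y $ 5 = -(x$1*y$5 - x$5*y$1) + (x$3*y$4 - x$4*y$3) + (x$5*y$8 - x$8*y$5)"
   "gv a x y $ 6 = (x$1*y$6 - x$6*y$1) + (x$2*y$7 - x$7*y$2) + a*(x$6*y$8 - x$8*y$6)"
   "gv a x y $ 7 = -(x$1*y$7 - x$7*y$1) + (x$3*y$6 - x$6*y$3) + a*(x$7*y$8 - x$8*y$7)"
   "gv a x y $ 8 = 0"
  by (simp_all add: gv_def)
lemma B_gv: "tr8 (gv a x \<circ> gv a y) = 12*x$1*y$1 + 6*(x$2*y$3 + x$3*y$2) + 2*(1+a^2)*x$8*y$8"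
  unfolding tr8_def sum_8 o_def gv_comp
  by (simp add: axis_def algebra_simps power2_eq_square)
lemma gram0:
  fixes p q r :: "4 \<Rightarrow> real"
  shows "det (\<chi> i j. 12 * p i * p j + 6 * (q i * r j + r i * q j) :: real^4^4) = 0"
proof -
  define L :: "real^4^4" where "L = (\<chi> k i. if k = 1 then p i else if k = 2 then q i else if k = 3 then r i else 0)"
  define D :: "real^4^4" where "D = (\<chi> k l. if k = 1 \<and> l = 1 then 12 else if (k = 2 \<and> l = 3) \<or> (k = 3 \<and> l = 2) then 6 else 0)"
  have e: "(\<chi> i j. 12 * p i * p j + 6 * (q i * r j + r i * q j) :: real^4^4) = transpose L ** (D ** L)"
    unfolding vec_eq_iff forall_4 
    by (simp add: L_def D_def matrix_matrix_mult_def transpose_def sum_4 algebra_simps)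
  have "row 4 D = 0" by (simp add: row_def D_def vec_eq_iff forall_4)
  hence "det D = 0" by (rule det_zero_row(1))
  thus ?thesis unfolding e by (simp add: det_mul)
qed
lemma gv_linear: "linear (gv a x)"
  by (intro linearI) (simp_all add: vec_eq_iff forall_8 gv_def algebra_simps)
lemma lin_exp: "linear (g::real^8\<Rightarrow>real^8) \<Longrightarrow> g w = (\<Sum>j\<in>UNIV. w$j *\<^sub>R g (axis j 1))"
proof -
  assume g: "linear g"
  have "w = (\<Sum>j\<in>UNIV. w$j *\<^sub>R axis j 1)"
    by (simp add: vec_eq_iff forall_8 sum_8 axis_def)
  hence "g w = g (\<Sum>j\<in>UNIV. w$j *\<^sub>R axis j 1)" by simp
  also have "\<dots> = (\<Sum>j\<in>UNIV. w$j *\<^sub>R g (axis j 1))"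
    by (simp add: linear_sum[OF g] linear_scale[OF g])
  finally show ?thesis .
qed
lemma tr8_comp: "linear (g::real^8\<Rightarrow>real^8) \<Longrightarrow> linear h \<Longrightarrow>
   tr8 (g \<circ> h) = (\<Sum>k\<in>UNIV. \<Sum>j\<in>UNIV. (g (axis j 1))$k * (h (axis k 1))$j)"
  unfolding tr8_def o_def
  by (subst lin_exp[of g]) (auto simp: sum_component mult.commute)
lemma lim_linear:
  fixes F :: "real \<Rightarrow> 'v::real_normed_vector \<Rightarrow> 'v \<Rightarrow> 'v"
  assumes lim: "\<And>x y. ((\<lambda>t. F t x y) \<longlongrightarrow> L x y) at_top"
    and ev: "eventually (\<lambda>t. \<forall>u. linear (F t u)) at_top"
  shows "linear (L u)"
proof (rule linearI)
  fix x y
  have "((\<lambda>t. F t u x + F t u y) \<longlongrightarrow> L u x + L u y) at_top"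
    by (intro tendsto_add lim)
  moreover have "eventually (\<lambda>t. F t u x + F t u y = F t u (x+y)) at_top"
    using ev by eventually_elim (simp add: linear_add)
  ultimately have "((\<lambda>t. F t u (x+y)) \<longlongrightarrow> L u x + L u y) at_top"
    by (rule Lim_transform_eventually)
  then show "L u (x + y) = L u x + L u y"
    using lim tendsto_unique trivial_limit_at_top_linorder by blast
next
  fix c x
  have "((\<lambda>t. c *\<^sub>R F t u x) \<longlongrightarrow> c *\<^sub>R L u x) at_top"
    by (intro tendsto_scaleR tendsto_const lim)
  moreover have "eventually (\<lambda>t. c *\<^sub>R F t u x = F t u (c *\<^sub>R x)) at_top"
    using ev by eventually_elim (simp add: linear_scale)
  ultimately have "((\<lambda>t. F t u (c *\<^sub>R x)) \<longlongrightarrow> c *\<^sub>R L u x) at_top"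
    by (rule Lim_transform_eventually)
  then show "L u (c *\<^sub>R x) = c *\<^sub>R L u x"
    using lim tendsto_unique trivial_limit_at_top_linorder by blast
qed
lemma det_tendsto:
  fixes M :: "real \<Rightarrow> real^'n^'n"
  assumes "\<And>i j. ((\<lambda>t. M t $ i $ j) \<longlongrightarrow> M' $ i $ j) F"
  shows "((\<lambda>t. det (M t)) \<longlongrightarrow> det M') F"
  unfolding det_def
  by (intro tendsto_sum tendsto_mult tendsto_const tendsto_prod assms)


lemma tau_gv: "tr8 (gv a x) = -2*(1+a)*x$8"
  by (simp add: tr8_def sum_8 gv_def axis_def algebra_simps)

lemma part2_neg:
  assumes a: "a \<noteq> -1" and cont: "contraction (gbr a) b'" and iso: "lie_isomorphic b' (gbr (-1))"
  shows False
proof -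
  obtain Phi :: "real \<Rightarrow> real^8 \<Rightarrow> real^8" where PL: "\<forall>t\<ge>1. linear (Phi t) \<and> bij (Phi t)"
    and lim: "\<forall>x y. ((\<lambda>t. inv (Phi t) (gbr a (Phi t x) (Phi t y))) \<longlongrightarrow> b' x y) at_top"
    using cont unfolding contraction_def by blast
  obtain f :: "real^8 \<Rightarrow> real^8" where fl: "linear f" and fb: "bij f" and fh: "\<forall>x y. f (b' x y) = gbr (-1) (f x) (f y)"
    using iso unfolding lie_isomorphic_def by blast
  define bt where "bt t u v = inv (Phi t) (gv a (Phi t u) (Phi t v))" for t u v
  have lim': "((\<lambda>t. bt t x y) \<longlongrightarrow> b' x y) at_top" for x y
    using lim by (simp add: bt_def gbr_eq)
  have ev: "eventually (\<lambda>t. linear (Phi t) \<and> bij (Phi t)) at_top"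
    using PL eventually_at_top_linorder by blast
  have btconj: "bt t u = inv (Phi t) \<circ> gv a (Phi t u) \<circ> Phi t" for t u
    by (rule ext) (simp add: bt_def)
  have btcomp: "bt t u \<circ> bt t v = inv (Phi t) \<circ> (gv a (Phi t u) \<circ> gv a (Phi t v)) \<circ> Phi t"
    if "bij (Phi t)" for t u v
  proof (rule ext)
    fix w
    have "Phi t (inv (Phi t) z) = z" for z using that by (simp add: bij_is_surj surj_f_inv_f)
    thus "(bt t u \<circ> bt t v) w = (inv (Phi t) \<circ> (gv a (Phi t u) \<circ> gv a (Phi t v)) \<circ> Phi t) w"
      by (simp add: bt_def)
  qed
  have linbt: "eventually (\<lambda>t. \<forall>u. linear (bt t u)) at_top"
    using ev
  proof eventually_elim
    case (elim t)
    show ?case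
      using elim inv_linear8 gv_linear unfolding btconj by (intro allI linear_compose) auto
  qed
  have b'lin: "linear (b' u)" for u
    by (rule lim_linear[OF lim' linbt])
  have finv: "inv f (f z) = z" for z using fb by (simp add: bij_is_inj)
  have ffinv: "f (inv f z) = z" for z using fb by (simp add: bij_is_surj surj_f_inv_f)
  have b'conj: "b' u = inv f \<circ> gv (-1) (f u) \<circ> f" for u
  proof (rule ext)
    fix v
    have "b' u v = inv f (f (b' u v))" by (simp add: finv)
    thus "b' u v = (inv f \<circ> gv (-1) (f u) \<circ> f) v" by (simp add: fh gbr_eq)
  qed
  have b'comp: "b' u \<circ> b' v = inv f \<circ> (gv (-1) (f u) \<circ> gv (-1) (f v)) \<circ> f" for u v
    by (rule ext) (simp add: b'conj ffinv)
  have ifl: "linear (inv f)" using fl fb by (rule inv_linear8)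
  define c where "c = 2*(1+a^2)/(4*(1+a)^2)"
  define Q where "Q t u v = tr8 (bt t u \<circ> bt t v) - c * tr8 (bt t u) * tr8 (bt t v)" for t u v
  define Q' where "Q' u v = tr8 (b' u \<circ> b' v) - c * tr8 (b' u) * tr8 (b' v)" for u v
  have trlim: "((\<lambda>t. tr8 (bt t u)) \<longlongrightarrow> tr8 (b' u)) at_top" for u
    unfolding tr8_def by (intro tendsto_sum tendsto_vec_nth lim')
  have trlim2: "((\<lambda>t. tr8 (bt t u \<circ> bt t v)) \<longlongrightarrow> tr8 (b' u \<circ> b' v)) at_top" for u v
  proof -
    have "((\<lambda>t. \<Sum>k\<in>UNIV. \<Sum>j\<in>UNIV. (bt t u (axis j 1))$k * (bt t v (axis k 1))$j)
          \<longlongrightarrow> (\<Sum>k\<in>UNIV. \<Sum>j\<in>UNIV. (b' u (axis j 1))$k * (b' v (axis k 1))$j)) at_top"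
      by (intro tendsto_sum tendsto_mult tendsto_vec_nth lim')
    moreover have "eventually (\<lambda>t. (\<Sum>k\<in>UNIV. \<Sum>j\<in>UNIV. (bt t u (axis j 1))$k * (bt t v (axis k 1))$j)
          = tr8 (bt t u \<circ> bt t v)) at_top"
      using linbt by eventually_elim (simp add: tr8_comp)
    ultimately show ?thesis
      by (simp add: tr8_comp b'lin Lim_transform_eventually)
  qed
  have Qlim: "((\<lambda>t. Q t u v) \<longlongrightarrow> Q' u v) at_top" for u v
    unfolding Q_def Q'_def by (intro tendsto_diff tendsto_mult tendsto_const trlim trlim2)
  have a1: "1 + a \<noteq> 0" using a by auto
  have ckey: "c * (-2*(1+a)*x) * (-2*(1+a)*y) = 2*(1+a^2)*x*y" for x y
  proof -
    have "(1+a)^2 \<noteq> 0" using a1 by simp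
    hence cc: "c * (4*(1+a)^2) = 2*(1+a^2)" unfolding c_def by simp
    have "c * (-2*(1+a)*x) * (-2*(1+a)*y) = (c * (4*(1+a)^2)) * x * y"
      by (simp add: power2_eq_square algebra_simps)
    thus ?thesis using cc by simp
  qed
  have Qform: "eventually (\<lambda>t. \<forall>u v. Q t u v = 12 * (Phi t u)$1 * (Phi t v)$1
       + 6 * ((Phi t u)$2 * (Phi t v)$3 + (Phi t u)$3 * (Phi t v)$2)) at_top"
    using ev
  proof eventually_elim
    case (elim t)
    show ?case
    proof (intro allI)
      fix u v
      have t1: "tr8 (bt t u) = -2*(1+a)*(Phi t u)$8" for u
        unfolding btconj using elim by (simp add: tr8_conj gv_linear tau_gv)
      have t2: "tr8 (bt t u \<circ> bt t v) = 12*(Phi t u)$1*(Phi t v)$1 + 6*((Phi t u)$2*(Phi t v)$3 + (Phi t u)$3*(Phi t v)$2) + 2*(1+a^2)*(Phi t u)$8*(Phi t v)$8"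
        using elim by (simp add: btcomp tr8_conj gv_linear linear_compose B_gv)
      have "Q t u v = (12*(Phi t u)$1*(Phi t v)$1 + 6*((Phi t u)$2*(Phi t v)$3 + (Phi t u)$3*(Phi t v)$2) + 2*(1+a^2)*(Phi t u)$8*(Phi t v)$8)
          - c * (-2*(1+a)*(Phi t u)$8) * (-2*(1+a)*(Phi t v)$8)"
        unfolding Q_def by (simp only: t1 t2)
      also have "\<dots> = 12 * (Phi t u)$1 * (Phi t v)$1
       + 6 * ((Phi t u)$2 * (Phi t v)$3 + (Phi t u)$3 * (Phi t v)$2)"
        by (subst ckey) simp
      finally show "Q t u v = 12 * (Phi t u)$1 * (Phi t v)$1
       + 6 * ((Phi t u)$2 * (Phi t v)$3 + (Phi t u)$3 * (Phi t v)$2)" .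
    qed
  qed
  define z :: "4 \<Rightarrow> real^8" where
    "z i = (if i = 1 then axis 1 1 else if i = 2 then axis 2 1 + axis 3 1 else if i = 3 then axis 2 1 - axis 3 1 else axis 8 1)" for i
  define w where "w i = inv f (z i)" for i
  define G where "G t = (\<chi> i j. Q t (w i) (w j))" for t
  define G' where "G' = (\<chi> i j. Q' (w i) (w j))"
  have dlim: "((\<lambda>t. det (G t)) \<longlongrightarrow> det G') at_top"
    by (rule det_tendsto) (simp add: G_def G'_def Qlim)
  have dev: "eventually (\<lambda>t. det (G t) = 0) at_top"
    using Qform
  proof eventually_elim
    case (elim t)
    have "G t = (\<chi> i j. 12 * (Phi t (w i))$1 * (Phi t (w j))$1
       + 6 * ((Phi t (w i))$2 * (Phi t (w j))$3 + (Phi t (w i))$3 * (Phi t (w j))$2))"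
      unfolding G_def using elim by simp
    thus ?case using gram0 by (simp add: mult.assoc)
  qed
  have "((\<lambda>t. det (G t)) \<longlongrightarrow> 0) at_top"
    using dev by (simp add: tendsto_eventually)
  hence d0: "det G' = 0"
    using dlim tendsto_unique trivial_limit_at_top_linorder by blast
  have Q'f: "Q' u v = 12*(f u)$1*(f v)$1 + 6*((f u)$2*(f v)$3 + (f u)$3*(f v)$2) + 4*(f u)$8*(f v)$8" for u v
  proof -
    have "tr8 (b' u) = 0" for u
      unfolding b'conj using fl fb by (simp add: tr8_conj gv_linear tau_gv)
    moreover have "tr8 (b' u \<circ> b' v) = 12*(f u)$1*(f v)$1 + 6*((f u)$2*(f v)$3 + (f u)$3*(f v)$2) + 4*(f u)$8*(f v)$8"
      unfolding b'comp using fl fb by (simp add: tr8_conj gv_linear linear_compose B_gv)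
    ultimately show ?thesis unfolding Q'_def by simp
  qed
  have Gd: "G' = (\<chi> i j. if i = j then (if i = 1 then 12 else if i = 2 then 12 else if i = 3 then -12 else 4) else 0)"
  proof -
    have Gij: "G' $ i $ j = 12*(z i)$1*(z j)$1 + 6*((z i)$2*(z j)$3 + (z i)$3*(z j)$2) + 4*(z i)$8*(z j)$8" for i j
      by (simp add: G'_def Q'f w_def ffinv)
    have zz: "(z 1)$1 = 1" "(z 1)$2 = 0" "(z 1)$3 = 0" "(z 1)$8 = 0"
       "(z 2)$1 = 0" "(z 2)$2 = 1" "(z 2)$3 = 1" "(z 2)$8 = 0"
       "(z 3)$1 = 0" "(z 3)$2 = 1" "(z 3)$3 = -1" "(z 3)$8 = 0"
       "(z 4)$1 = 0" "(z 4)$2 = 0" "(z 4)$3 = 0" "(z 4)$8 = 1"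
      by (simp_all add: z_def axis_def)
    show ?thesis
      unfolding vec_eq_iff forall_4 by (simp add: Gij zz)
  qed
  have "det G' = prod (\<lambda>i. G'$i$i) UNIV"
    by (rule det_diagonal) (simp add: Gd)
  also have "\<dots> = 12 * 12 * (-12) * 4"
  proof -
    have "prod (\<lambda>i. G'$i$i) UNIV = G'$1$1 * (G'$2$2 * (G'$3$3 * G'$4$4))"
      unfolding UNIV_4 by simp
    moreover have "G'$1$1 = 12" "G'$2$2 = 12" "G'$3$3 = -12" "G'$4$4 = 4"
      unfolding Gd by simp_all
    ultimately show ?thesis by simp
  qed
  finally have "det G' = 12 * 12 * (-12) * 4" .
  with d0 show False by simp
qed

lemma iso_sym8:
  fixes b' g :: "real^8 \<Rightarrow> real^8 \<Rightarrow> real^8"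
  assumes "lie_isomorphic b' g"
  shows "lie_isomorphic g b'"
proof -
  obtain f :: "real^8 \<Rightarrow> real^8" where fl: "linear f" and fb: "bij f" and fh: "\<forall>x y. f (b' x y) = g (f x) (f y)"
    using assms unfolding lie_isomorphic_def by blast
  have finv: "inv f (f z) = z" for z using fb by (simp add: bij_is_inj)
  have ffinv: "f (inv f z) = z" for z using fb by (simp add: bij_is_surj surj_f_inv_f)
  have "inv f (g x y) = b' (inv f x) (inv f y)" for x y
  proof -
    have "f (b' (inv f x) (inv f y)) = g x y" using fh ffinv by simp
    hence "inv f (f (b' (inv f x) (inv f y))) = inv f (g x y)" by simp
    thus ?thesis using finv by simp
  qed
  moreover have "linear (inv f)" using fl fb by (rule inv_linear8)
  moreover have "bij (inv f)" using fb by (rule bij_imp_bij_inv)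
  ultimately show ?thesis unfolding lie_isomorphic_def by blast
qed

theorem corollary1:
  shows "(\<forall>a::real. -1 \<le> a \<and> a \<le> 1 \<longrightarrow>
            (\<exists>phi t. linear_deformation_cochain (gbr (-1)) phi \<and>
                     lie_isomorphic (\<lambda>x y. gbr (-1) x y + t *\<^sub>R phi x y) (gbr a)))
       \<and> (\<forall>a::real. -1 \<le> a \<and> a \<le> 1 \<longrightarrow>
            \<not> (\<exists>b'. contraction (gbr a) b' \<and> lie_isomorphic b' (gbr (-1))
                    \<and> \<not> lie_isomorphic (gbr a) b'))"
proof (intro conjI allI)
  fix a :: real
  show "-1 \<le> a \<and> a \<le> 1 \<longrightarrow>
            (\<exists>phi t. linear_deformation_cochain (gbr (-1)) phi \<and>
                     lie_isomorphic (\<lambda>x y. gbr (-1) x y + t *\<^sub>R phi x y) (gbr a))"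
    by (rule part1)
next
  fix a :: real
  show "-1 \<le> a \<and> a \<le> 1 \<longrightarrow>
            \<not> (\<exists>b'. contraction (gbr a) b' \<and> lie_isomorphic b' (gbr (-1))
                    \<and> \<not> lie_isomorphic (gbr a) b')"
  proof (intro impI notI)
    assume "\<exists>b'. contraction (gbr a) b' \<and> lie_isomorphic b' (gbr (-1)) \<and> \<not> lie_isomorphic (gbr a) b'"
    then obtain b' where c: "contraction (gbr a) b'" and i: "lie_isomorphic b' (gbr (-1))"
      and ni: "\<not> lie_isomorphic (gbr a) b'" by blast
    show False
    proof (cases "a = -1")
      case True
      then show False using iso_sym8[OF i] ni by simp
    next
      case False
      then show False using part2_neg c i by blast
    qed
  qed
qed

end
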